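(* If $0\le p\le\frac12<t\le1$, then bold play is optimal, i.e. $\pi(p,t)=p$.
   Context: Let $\beta_1,\beta_2,\ldots$ be independent Bernoulli random variables with success probability $p$. A stake sequence is a sequence $\gamma=(c_1,c_2,\ldots)$ of non-negative reals with $c_1\ge c_2\ge\cdots$ and $\sum_i c_i=1$; write $S_\gamma=\sum_i c_i\beta_i$. For $0\le p\le t\le 1$ define $\pi(p,t)=\sup\{\mathbf P(S_\gamma\ge t)\mid \gamma \text{ a stake sequence}\}$. Bold play for threshold $t$ is the stake sequence with $c_i=\frac1m$ for $i\le m$ and $c_i=0$ for $i>m$, where $m=\lfloor 1/t\rfloor$; it is optimal if it attains $\pi(p,t)$. For $t>\frac12$ bold play is $c_1=1$, with success probability $p$. *)

theory Defs
  imports "HOL-Probability.Probability"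
begin

text \<open>Stakes are indexed from 0 (c 0 corresponds to c_1 in the paper).\<close>
definition stake_seq :: "(nat \<Rightarrow> real) \<Rightarrow> bool" where
  "stake_seq c \<longleftrightarrow> (\<forall>i. 0 \<le> c i) \<and> (\<forall>i. c (Suc i) \<le> c i) \<and> c sums 1"

text \<open>Probability space of i.i.d. Bernoulli(p) variables beta_i(omega) = omega i.\<close>
definition bern_space :: "real \<Rightarrow> (nat \<Rightarrow> bool) measure" where
  "bern_space p = PiM UNIV (\<lambda>_::nat. measure_pmf (bernoulli_pmf p))"

definition S_gamma :: "(nat \<Rightarrow> real) \<Rightarrow> (nat \<Rightarrow> bool) \<Rightarrow> real" where
  "S_gamma c \<omega> = (\<Sum>i. c i * of_bool (\<omega> i))"

definition success_prob :: "real \<Rightarrow> real \<Rightarrow> (nat \<Rightarrow> real) \<Rightarrow> real" where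
  "success_prob p t c =
     measure (bern_space p) {\<omega> \<in> space (bern_space p). S_gamma c \<omega> \<ge> t}"

definition pi_val :: "real \<Rightarrow> real \<Rightarrow> real" where
  "pi_val p t = (SUP c\<in>{c. stake_seq c}. success_prob p t c)"

end

theory Submission
  imports Defs
begin

lemma distr_PiM_map_pmf:
  fixes D :: "'a pmf" and g :: "'a \<Rightarrow> 'b"
  shows "distr (PiM (UNIV::nat set) (\<lambda>_. measure_pmf D)) (PiM UNIV (\<lambda>_. measure_pmf (map_pmf g D))) (\<lambda>\<omega> i. g (\<omega> i))
         = PiM UNIV (\<lambda>_. measure_pmf (map_pmf g D))"
    (is "distr ?K ?I ?t = ?I")
proof (rule measure_eqI_PiM_infinite[symmetric, OF refl])
  interpret prob_space ?I
    by (intro prob_space_PiM) (auto simp: measure_pmf.prob_space_axioms)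
  show "finite_measure ?I"
    by unfold_locales
  have mt: "?t \<in> measurable ?K ?I"
  proof (rule measurable_PiM_single')
    fix i :: nat
    have "(\<lambda>\<omega>. \<omega> i) \<in> measurable ?K (measure_pmf D)"
      by (rule measurable_component_singleton) simp
    moreover have "g \<in> measurable (measure_pmf D) (count_space UNIV)" by simp
    ultimately show "(\<lambda>\<omega>. g (\<omega> i)) \<in> measurable ?K (measure_pmf (map_pmf g D))"
      using measurable_compose[of "\<lambda>\<omega>. \<omega> i" ?K "measure_pmf D" g "count_space UNIV"]
      by (simp add: measurable_cong_sets)
  qed (auto simp: space_PiM)
  show "sets (distr ?K ?I ?t) = sets ?I" by simp
  fix A J assume J: "finite J" "J \<subseteq> (UNIV::nat set)" and A: "\<And>i. i \<in> J \<Longrightarrow> A i \<in> sets (measure_pmf (map_pmf g D))"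
  have "?I (prod_emb UNIV (\<lambda>_. measure_pmf (map_pmf g D)) J (Pi\<^sub>E J A)) = (\<Prod>j\<in>J. emeasure (measure_pmf (map_pmf g D)) (A j))"
    using J A by (intro emeasure_PiM_emb) (auto simp: measure_pmf.prob_space_axioms)
  also have "\<dots> = (\<Prod>j\<in>J. emeasure (measure_pmf D) (g -` A j))"
    by (intro prod.cong refl) (simp add: map_pmf_rep_eq emeasure_distr)
  also have "\<dots> = ?K (prod_emb UNIV (\<lambda>_. measure_pmf D) J (Pi\<^sub>E J (\<lambda>j. g -` A j)))"
    using J by (intro emeasure_PiM_emb[symmetric]) (auto simp: measure_pmf.prob_space_axioms)
  also have "prod_emb UNIV (\<lambda>_. measure_pmf D) J (Pi\<^sub>E J (\<lambda>j. g -` A j)) = ?t -` prod_emb UNIV (\<lambda>_. measure_pmf (map_pmf g D)) J (Pi\<^sub>E J A) \<inter> space ?K"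
    by (auto simp: prod_emb_def space_PiM PiE_iff)
  also have "?K \<dots> = distr ?K ?I ?t (prod_emb UNIV (\<lambda>_. measure_pmf (map_pmf g D)) J (Pi\<^sub>E J A))"
    using J A mt by (intro emeasure_distr[symmetric]) (auto intro!: sets_PiM_I)
  finally show "?I (prod_emb UNIV (\<lambda>_. measure_pmf (map_pmf g D)) J (Pi\<^sub>E J A)) = distr ?K ?I ?t (prod_emb UNIV (\<lambda>_. measure_pmf (map_pmf g D)) J (Pi\<^sub>E J A))" .
qed


lemma arc_lemma:
  fixes l \<theta> \<theta>' m k :: nat
  assumes "\<theta> < \<theta>'" "\<theta>' < m" "(l + \<theta>) mod m < k" "(l + \<theta>') mod m < k"
  shows "\<theta>' - \<theta> < k \<or> \<theta>' - \<theta> > m - k"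
proof -
  define a where "a = (l + \<theta>) mod m"
  define d where "d = \<theta>' - \<theta>"
  have m0: "m > 0" using assms by auto
  have am: "a < m" unfolding a_def using m0 by simp
  have dm: "d < m" unfolding d_def using assms by simp
  have "(l + \<theta>') mod m = (a + d) mod m"
  proof -
    have "l + \<theta>' = (l + \<theta>) + (\<theta>' - \<theta>)" using assms(1) by simp
    then show ?thesis unfolding a_def d_def by (metis mod_add_left_eq)
  qed
  show ?thesis
  proof (cases "a + d < m")
    case True
    then have "(a + d) mod m = a + d" by simp
    then show ?thesis using assms(4) \<open>(l + \<theta>') mod m = (a + d) mod m\<close> d_def by simp
  next
    case False
    then have "(a + d) mod m = a + d - m" using am dm
      by (simp add: le_mod_geq)
    moreover have "a < k" using assms(3) a_def by simp
    ultimately show ?thesis using assms(4) \<open>(l + \<theta>') mod m = (a + d) mod m\<close> d_def False by arith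
  qed
qed

lemma katona_count:
  fixes k m :: nat and \<Theta> :: "nat set"
  assumes "1 \<le> k" "2 * k \<le> m" "\<Theta> \<subseteq> {..<m}"
    and H: "\<And>\<theta> \<theta>'. \<theta> \<in> \<Theta> \<Longrightarrow> \<theta>' \<in> \<Theta> \<Longrightarrow> \<theta> < \<theta>' \<Longrightarrow> \<theta>' - \<theta> < k \<or> \<theta>' - \<theta> > m - k"
  shows "card \<Theta> \<le> k"
proof (cases "\<Theta> = {}")
  case True then show ?thesis by simp
next
  case False
  have fin: "finite \<Theta>" using assms(3) finite_subset by blast
  define t0 where "t0 = Min \<Theta>"
  have t0: "t0 \<in> \<Theta>" "\<And>x. x \<in> \<Theta> \<Longrightarrow> t0 \<le> x" using fin False by (auto simp: t0_def)
  define \<phi> where "\<phi> x = (if x - t0 < k then x - t0 else x - t0 - (m - k))" for x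
  have cls: "x - t0 < k \<or> x - t0 > m - k" if "x \<in> \<Theta>" for x
  proof (cases "x = t0")
    case True then show ?thesis using assms by simp
  next
    case False then show ?thesis using H[OF t0(1) that] t0(2)[OF that] by simp
  qed
  have img: "\<phi> ` \<Theta> \<subseteq> {..<k}"
  proof
    fix y assume "y \<in> \<phi> ` \<Theta>"
    then obtain x where x: "x \<in> \<Theta>" "y = \<phi> x" by auto
    have "x < m" using x assms(3) by auto
    then show "y \<in> {..<k}" using cls[OF x(1)] x(2) assms by (auto simp: \<phi>_def)
  qed
  have inj: "inj_on \<phi> \<Theta>"
  proof (rule inj_onI)
    fix x y assume xy: "x \<in> \<Theta>" "y \<in> \<Theta>" "\<phi> x = \<phi> y"
    have lx: "t0 \<le> x" "t0 \<le> y" using t0 xy by auto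
    have mk: "\<not> (x < y \<and> y - x = m - k)" if "x \<in> \<Theta>" "y \<in> \<Theta>" for x y
      using H[OF that] assms(2) by auto
    have a: "\<not> (x < y \<and> y - x = m - k)" "\<not> (y < x \<and> x - y = m - k)"
      using mk[OF xy(1) xy(2)] mk[OF xy(2) xy(1)] by auto
    show "x = y"
    proof (cases "x - t0 < k"; cases "y - t0 < k")
      assume "x - t0 < k" "y - t0 < k" then show ?thesis using xy(3) lx unfolding \<phi>_def by simp
    next
      assume h: "\<not> x - t0 < k" "\<not> y - t0 < k"
      then have "x - t0 - (m - k) = y - t0 - (m - k)" using xy(3) unfolding \<phi>_def by simp
      then show ?thesis using lx cls[OF xy(1)] cls[OF xy(2)] h by linarith
    next
      assume h: "x - t0 < k" "\<not> y - t0 < k"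
      then have "x - t0 = y - t0 - (m - k)" using xy(3) unfolding \<phi>_def by simp
      then show ?thesis using a lx h cls[OF xy(2)] by linarith
    next
      assume h: "\<not> x - t0 < k" "y - t0 < k"
      then have "y - t0 = x - t0 - (m - k)" using xy(3) unfolding \<phi>_def by simp
      then show ?thesis using a lx h cls[OF xy(1)] by linarith
    qed
  qed
  have "card \<Theta> = card (\<phi> ` \<Theta>)" using inj by (simp add: card_image)
  also have "\<dots> \<le> card {..<k}" by (rule card_mono[OF _ img]) simp
  finally show ?thesis by simp
qed


lemma card_shift:
  fixes m k \<theta> :: nat
  assumes "k \<le> m"
  shows "card {l\<in>{..<m}. (l + \<theta>) mod m < k} = k"
proof -
  define f where "f l = (l + \<theta>) mod m" for l
  have inj: "inj_on f {..<m}"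
  proof (rule inj_onI)
    have *: "x = y" if "x < m" "y < m" "x \<le> y" "(x + \<theta>) mod m = (y + \<theta>) mod m" for x y
    proof -
      have "m dvd (y + \<theta>) - (x + \<theta>)" using that mod_eq_dvd_iff_nat[of "x + \<theta>" "y + \<theta>" m] by simp
      then have "m dvd y - x" by simp
      moreover have "y - x < m" using that by simp
      ultimately show ?thesis using that by (metis diff_is_0_eq dvd_imp_le le_antisym not_less zero_less_diff)
    qed
    fix x y assume "x \<in> {..<m}" "y \<in> {..<m}" "f x = f y"
    then show "x = y" using *[of x y] *[of y x] by (cases "x \<le> y") (auto simp: f_def)
  qed
  have "f ` {..<m} \<subseteq> {..<m}" using assms by (cases "m = 0") (auto simp: f_def)
  then have fim: "f ` {..<m} = {..<m}"
    using inj by (simp add: card_image card_subset_eq)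
  have "f ` {l\<in>{..<m}. f l < k} = {j\<in>f ` {..<m}. j < k}" by auto
  also have "\<dots> = {..<k}" using fim assms by auto
  finally have "card (f ` {l\<in>{..<m}. f l < k}) = k" by simp
  moreover have "card (f ` {l\<in>{..<m}. f l < k}) = card {l\<in>{..<m}. f l < k}"
    by (rule card_image) (rule inj_on_subset[OF inj], auto)
  ultimately show ?thesis by (simp add: f_def)
qed

lemma coord_bernoulli:
  fixes m k \<theta> :: nat and p :: real
  assumes "1 \<le> k" "k \<le> m" "0 \<le> p" "p \<le> k / m"
  shows "map_pmf (\<lambda>(l, d). (l + \<theta>) mod m < k \<and> d)
           (pair_pmf (pmf_of_set {..<m}) (bernoulli_pmf (p * m / k))) = bernoulli_pmf p"
proof -
  have m0: "m > 0" using assms by simp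
  have r0: "0 \<le> p * m / k" using assms by simp
  have r1: "p * m / k \<le> 1" using assms m0 by (simp add: field_simps)
  have p1: "p \<le> 1" using assms(4) assms(2) m0
  proof -
    have "real k / real m \<le> 1" using assms(2) m0 by (simp add: divide_le_eq_1)
    then show ?thesis using assms(4) by linarith
  qed
  let ?M = "map_pmf (\<lambda>(l, d). (l + \<theta>) mod m < k \<and> d)
           (pair_pmf (pmf_of_set {..<m}) (bernoulli_pmf (p * m / k)))"
  have T: "pmf ?M True = p"
  proof -
    have pre: "(\<lambda>(l, d). (l + \<theta>) mod m < k \<and> d) -` {True} = {l. (l + \<theta>) mod m < k} \<times> {True}"
      by auto
    have "pmf ?M True = measure_pmf.prob (pmf_of_set {..<m}) {l. (l + \<theta>) mod m < k}
             * measure_pmf.prob (bernoulli_pmf (p * m / k)) {True}"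
      unfolding pmf_map pre by (rule measure_pmf_prob_product) auto
    also have "measure_pmf.prob (pmf_of_set {..<m}) {l. (l + \<theta>) mod m < k} = k / m"
      using m0 card_shift[OF assms(2), of \<theta>]
      by (subst measure_pmf_of_set) (auto simp: Int_def)
    also have "measure_pmf.prob (bernoulli_pmf (p * m / k)) {True} = p * m / k"
      using r0 r1 by (simp add: measure_pmf_single)
    finally show ?thesis using m0 assms(1) by simp
  qed
  show ?thesis
  proof (rule pmf_eqI)
    fix b :: bool
    show "pmf ?M b = pmf (bernoulli_pmf p) b"
      using T assms(3) p1 by (cases b) (simp_all add: pmf_False_conv_True)
  qed
qed


lemma meas_map_PiM:
  fixes D :: "'a pmf" and E :: "'b pmf" and g :: "'a \<Rightarrow> 'b"
  shows "(\<lambda>\<omega> i. g (\<omega> i)) \<in> measurable (PiM (UNIV::nat set) (\<lambda>_. measure_pmf D)) (PiM UNIV (\<lambda>_. measure_pmf E))"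
proof (rule measurable_PiM_single')
  fix i :: nat
  have "(\<lambda>\<omega>. \<omega> i) \<in> measurable (PiM (UNIV::nat set) (\<lambda>_. measure_pmf D)) (measure_pmf D)"
    by (rule measurable_component_singleton) simp
  moreover have "g \<in> measurable (measure_pmf D) (count_space UNIV)" by simp
  ultimately show "(\<lambda>\<omega>. g (\<omega> i)) \<in> measurable (PiM (UNIV::nat set) (\<lambda>_. measure_pmf D)) (measure_pmf E)"
    using measurable_compose[of "\<lambda>\<omega>. \<omega> i" _ "measure_pmf D" g "count_space UNIV"]
    by (simp add: measurable_cong_sets)
qed (auto simp: space_PiM)

lemma S_summable:
  assumes "stake_seq c"
  shows "summable (\<lambda>i. c i * of_bool (\<omega> i))"
proof (rule summable_comparison_test'[where N=0])
  show "summable c" using assms unfolding stake_seq_def by (auto simp: sums_iff)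
  show "norm (c n * of_bool (\<omega> n)) \<le> c n" for n using assms unfolding stake_seq_def by auto
qed

lemma S_disj:
  assumes "stake_seq c" "\<And>i. \<not> (\<omega> i \<and> \<omega>' i)"
  shows "S_gamma c \<omega> + S_gamma c \<omega>' \<le> 1"
proof -
  have c: "summable c" "suminf c = 1" "\<And>i. 0 \<le> c i"
    using assms(1) unfolding stake_seq_def by (auto simp: sums_iff)
  have "S_gamma c \<omega> + S_gamma c \<omega>' = (\<Sum>i. c i * of_bool (\<omega> i) + c i * of_bool (\<omega>' i))"
    unfolding S_gamma_def by (rule suminf_add) (rule S_summable[OF assms(1)])+
  also have "\<dots> \<le> (\<Sum>i. c i)"
  proof (rule suminf_le)
    show "c i * of_bool (\<omega> i) + c i * of_bool (\<omega>' i) \<le> c i" for i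
      using assms(2)[of i] c(3)[of i] by auto
    show "summable (\<lambda>i. c i * of_bool (\<omega> i) + c i * of_bool (\<omega>' i))"
      by (intro summable_add S_summable[OF assms(1)])
  qed (use c in auto)
  finally show ?thesis using c by simp
qed

lemma S_meas:
  "S_gamma c \<in> borel_measurable (PiM (UNIV::nat set) (\<lambda>_. measure_pmf (bernoulli_pmf p)))"
  unfolding S_gamma_def
proof (rule borel_measurable_suminf)
  fix i :: nat
  have "(\<lambda>\<omega>. \<omega> i) \<in> measurable (PiM (UNIV::nat set) (\<lambda>_. measure_pmf (bernoulli_pmf p))) (measure_pmf (bernoulli_pmf p))"
    by (rule measurable_component_singleton) simp
  moreover have "(\<lambda>b. c i * of_bool b :: real) \<in> measurable (measure_pmf (bernoulli_pmf p)) borel" by simp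
  ultimately show "(\<lambda>\<omega>. c i * of_bool (\<omega> i)) \<in> borel_measurable (PiM (UNIV::nat set) (\<lambda>_. measure_pmf (bernoulli_pmf p)))"
    using measurable_compose by fastforce
qed


lemma bound_km:
  fixes k m :: nat and p t :: real
  assumes c: "stake_seq c" and t: "1/2 < t" and k: "1 \<le> k" "2 * k \<le> m" and p: "0 \<le> p" "p \<le> k / m"
  shows "success_prob p t c \<le> k / m"
proof -
  define D where "D = pair_pmf (pmf_of_set {..<m}) (bernoulli_pmf (p * m / k))"
  define \<Omega> where "\<Omega> = PiM (UNIV::nat set) (\<lambda>_. measure_pmf D)"
  define g where "g \<theta> = (\<lambda>(l, d). (l + \<theta>) mod m < k \<and> d)" for \<theta> :: nat
  define X where "X \<theta> = (\<lambda>(\<omega>::nat \<Rightarrow> nat \<times> bool) (i::nat). g \<theta> (\<omega> i))" for \<theta> :: nat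
  define E where "E = {\<omega> \<in> space (bern_space p). t \<le> S_gamma c \<omega>}"
  define A where "A \<theta> = {\<omega> \<in> space \<Omega>. t \<le> S_gamma c (X \<theta> \<omega>)}" for \<theta>
  have m0: "m > 0" using k by simp
  interpret \<Omega>: prob_space \<Omega>
    unfolding \<Omega>_def by (intro prob_space_PiM) (auto simp: measure_pmf.prob_space_axioms)
  have mapg: "map_pmf (g \<theta>) D = bernoulli_pmf p" for \<theta>
    unfolding g_def D_def by (rule coord_bernoulli) (use k p in auto)
  have Xm: "X \<theta> \<in> measurable \<Omega> (bern_space p)" for \<theta>
    unfolding X_def \<Omega>_def bern_space_def by (rule meas_map_PiM)
  have dist: "distr \<Omega> (bern_space p) (X \<theta>) = bern_space p" for \<theta>
    using distr_PiM_map_pmf[of D "g \<theta>"] unfolding mapg \<Omega>_def X_def bern_space_def .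
  have Es: "E \<in> sets (bern_space p)"
  proof -
    have [measurable]: "S_gamma c \<in> borel_measurable (bern_space p)"
      unfolding bern_space_def by (rule S_meas)
    show ?thesis unfolding E_def by measurable
  qed
  have spaceB: "space (bern_space p) = UNIV" by (simp add: bern_space_def space_PiM)
  have eqA: "X \<theta> -` E \<inter> space \<Omega> = A \<theta>" for \<theta>
    unfolding E_def A_def spaceB by auto
  have As: "A \<theta> \<in> sets \<Omega>" for \<theta>
    using measurable_sets[OF Xm Es] eqA by simp
  have each: "success_prob p t c = measure \<Omega> (A \<theta>)" for \<theta>
  proof -
    have "success_prob p t c = measure (distr \<Omega> (bern_space p) (X \<theta>)) E"
      unfolding dist success_prob_def E_def ..
    also have "\<dots> = measure \<Omega> (X \<theta> -` E \<inter> space \<Omega>)"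
      by (rule measure_distr[OF Xm Es])
    finally show ?thesis using eqA by simp
  qed
  have pw: "(\<Sum>\<theta><m. indicator (A \<theta>) \<omega> :: real) \<le> k" for \<omega>
  proof -
    define \<Theta> where "\<Theta> = {\<theta>\<in>{..<m}. \<omega> \<in> A \<theta>}"
    have "(\<Sum>\<theta><m. indicator (A \<theta>) \<omega> :: real) = (\<Sum>\<theta><m. of_bool (\<omega> \<in> A \<theta>))"
      by (simp add: indicator_def of_bool_def)
    also have "\<dots> = real (card \<Theta>)" unfolding \<Theta>_def by (simp add: Int_def)
    also have "card \<Theta> \<le> k"
    proof (rule katona_count[OF k])
      show "\<Theta> \<subseteq> {..<m}" unfolding \<Theta>_def by auto
      fix \<theta> \<theta>' assume th: "\<theta> \<in> \<Theta>" "\<theta>' \<in> \<Theta>" "\<theta> < \<theta>'"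
      show "\<theta>' - \<theta> < k \<or> m - k < \<theta>' - \<theta>"
      proof (rule ccontr)
        assume nd: "\<not> (\<theta>' - \<theta> < k \<or> m - k < \<theta>' - \<theta>)"
        have "\<not> (X \<theta> \<omega> i \<and> X \<theta>' \<omega> i)" for i
        proof
          assume "X \<theta> \<omega> i \<and> X \<theta>' \<omega> i"
          then have "(fst (\<omega> i) + \<theta>) mod m < k" "(fst (\<omega> i) + \<theta>') mod m < k"
            unfolding X_def g_def by (auto split: prod.splits)
          moreover have "\<theta>' < m" using th unfolding \<Theta>_def by auto
          ultimately show False using arc_lemma[OF th(3)] nd by blast
        qed
        then have "S_gamma c (X \<theta> \<omega>) + S_gamma c (X \<theta>' \<omega>) \<le> 1" by (rule S_disj[OF c])
        moreover have "t \<le> S_gamma c (X \<theta> \<omega>)" "t \<le> S_gamma c (X \<theta>' \<omega>)"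
          using th unfolding \<Theta>_def A_def by auto
        ultimately show False using t by linarith
      qed
    qed
    finally show ?thesis by simp
  qed
  have int: "integrable \<Omega> (indicator (A \<theta>) :: _ \<Rightarrow> real)" for \<theta>
    using As by (intro integrable_real_indicator) (simp_all add: \<Omega>.emeasure_finite top.not_eq_extremum[symmetric])
  have "real m * success_prob p t c = (\<Sum>\<theta><m. measure \<Omega> (A \<theta>))"
    using each by simp
  also have "\<dots> = (\<Sum>\<theta><m. integral\<^sup>L \<Omega> (indicator (A \<theta>) :: _ \<Rightarrow> real))"
    using As by (intro sum.cong refl) (simp add: Int_absorb2 sets.sets_into_space)
  also have "\<dots> = integral\<^sup>L \<Omega> (\<lambda>\<omega>. \<Sum>\<theta><m. indicator (A \<theta>) \<omega> :: real)"
    using Bochner_Integration.integral_sum[where I="{..<m}" and M=\<Omega> and f="\<lambda>\<theta>. indicator (A \<theta>) :: _ \<Rightarrow> real"] int by simp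
  also have "\<dots> \<le> integral\<^sup>L \<Omega> (\<lambda>_. real k)"
    by (rule integral_mono) (auto intro: int pw)
  also have "\<dots> = k" by (simp add: \<Omega>.prob_space)
  finally have "real m * success_prob p t c \<le> k" .
  then show ?thesis using m0 by (simp add: field_simps)
qed


lemma upper:
  assumes c: "stake_seq c" and t: "1/2 < t" and p: "0 \<le> p" "p \<le> 1/2"
  shows "success_prob p t c \<le> p"
proof -
  have key: "success_prob p t c \<le> p + 1 / real j" if j: "j \<ge> 1" for j :: nat
  proof -
    define m where "m = 2 * j"
    define k where "k = max 1 (nat \<lceil>p * m\<rceil>)"
    have m0: "real m > 0" using j by (simp add: m_def)
    have pm: "p * m \<le> j"
    proof -
      have "p * m = (2 * p) * real j" by (simp add: m_def)
      also have "\<dots> \<le> 1 * real j" using p by (intro mult_right_mono) auto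
      finally show ?thesis by simp
    qed
    have c1: "nat \<lceil>p * m\<rceil> \<le> j"
      using pm by (simp add: ceiling_le_iff nat_le_iff)
    have k1: "1 \<le> k" unfolding k_def by simp
    have k2: "2 * k \<le> m" using c1 j unfolding k_def m_def by simp
    have "p * m \<le> real (nat \<lceil>p * m\<rceil>)" by linarith
    also have "\<dots> \<le> real k" unfolding k_def by simp
    finally have pk: "p * m \<le> real k" .
    then have pk': "p \<le> real k / real m" using m0 by (simp add: field_simps)
    have kup: "real k \<le> p * m + 1"
    proof (cases "nat \<lceil>p * m\<rceil> \<le> 1")
      case True then show ?thesis unfolding k_def using p m0 by simp
    next
      case False then have "real k = real (nat \<lceil>p * m\<rceil>)" unfolding k_def by simp
      also have "\<dots> = of_int \<lceil>p * m\<rceil>" using p m0 by simp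
      also have "\<dots> \<le> p * m + 1" by (rule of_int_ceiling_le_add_one)
      finally show ?thesis .
    qed
    have "success_prob p t c \<le> real k / real m"
      by (rule bound_km[OF c t k1 k2 p(1) pk'])
    also have "\<dots> \<le> (p * m + 1) / m" using kup m0 by (simp add: divide_right_mono)
    also have "\<dots> = p + 1 / m" using m0 by (simp add: field_simps)
    also have "\<dots> \<le> p + 1 / j" using j by (simp add: m_def frac_le)
    finally show ?thesis .
  qed
  show ?thesis
  proof (rule ccontr)
    assume "\<not> ?thesis"
    then have "success_prob p t c - p > 0" by simp
    then obtain n where n: "inverse (real (Suc n)) < success_prob p t c - p"
      using reals_Archimedean by blast
    have "success_prob p t c \<le> p + 1 / real (Suc n)" by (rule key) simp
    then show False using n by (simp add: inverse_eq_divide)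
  qed
qed

definition bold1 :: "nat \<Rightarrow> real" where "bold1 i = (if i = 0 then 1 else 0)"

lemma bold1_stake: "stake_seq bold1"
  unfolding stake_seq_def bold1_def using sums_single[of 0 "\<lambda>_. 1::real"] by auto

lemma bold1_S: "S_gamma bold1 \<omega> = of_bool (\<omega> 0)"
proof -
  have "(\<lambda>i. bold1 i * of_bool (\<omega> i)) = (\<lambda>i. if i = 0 then of_bool (\<omega> 0) else 0)"
    by (auto simp: bold1_def)
  then show ?thesis unfolding S_gamma_def
    using sums_unique[OF sums_single[of 0 "\<lambda>_. of_bool (\<omega> 0) :: real"]] by simp
qed

lemma bold1_prob:
  assumes "0 \<le> p" "p \<le> 1" "0 < t" "t \<le> 1"
  shows "success_prob p t bold1 = p"
proof -
  let ?B = "bern_space p"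
  have dist: "distr ?B (measure_pmf (bernoulli_pmf p)) (\<lambda>\<omega>. \<omega> 0) = measure_pmf (bernoulli_pmf p)"
    unfolding bern_space_def by (rule distr_PiM_component) (auto simp: measure_pmf.prob_space_axioms)
  have m: "(\<lambda>\<omega>. \<omega> 0) \<in> measurable ?B (measure_pmf (bernoulli_pmf p))"
    unfolding bern_space_def by (rule measurable_component_singleton) simp
  have "{\<omega> \<in> space ?B. t \<le> S_gamma bold1 \<omega>} = (\<lambda>\<omega>. \<omega> 0) -` {True} \<inter> space ?B"
    using assms by (auto simp: bold1_S)
  then have "success_prob p t bold1 = measure ?B ((\<lambda>\<omega>. \<omega> 0) -` {True} \<inter> space ?B)"
    unfolding success_prob_def by simp
  also have "\<dots> = measure (distr ?B (measure_pmf (bernoulli_pmf p)) (\<lambda>\<omega>. \<omega> 0)) {True}"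
    by (rule measure_distr[symmetric, OF m]) simp
  also have "\<dots> = p" unfolding dist using assms by (simp add: measure_pmf_single)
  finally show ?thesis .
qed

theorem corollary16:
  fixes p t :: real
  assumes "0 \<le> p" and "p \<le> 1/2" and "1/2 < t" and "t \<le> 1"
  shows "pi_val p t = p"
  unfolding pi_val_def
proof (rule cSup_eq_maximum)
  show "p \<in> (\<lambda>c. success_prob p t c) ` {c. stake_seq c}"
    using bold1_stake bold1_prob[of p t] assms by (auto intro!: image_eqI[of _ _ bold1])
  show "x \<le> p" if "x \<in> (\<lambda>c. success_prob p t c) ` {c. stake_seq c}" for x
    using that upper assms by auto
qed


end
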